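(* Let $\mathcal{K}$ be a Hilbert space, let $A$ be a closable, densely defined operator in $\mathcal{K}$, let $A_0$ be an operator with $A_0\subseteq A^*$, and let $(T_n)_{n=0}^\infty\subseteq\mathbf{B}(\mathcal{K})$ be a sequence converging to $I_\mathcal{K}$ in the weak operator topology such that for every $n$: (f1) the commutator $\mathrm{ad}(T_n,\bar A)=T_n\bar A-\bar AT_n$ is densely defined and bounded in $\mathcal{K}$; and (f2) $T_n^*\mathcal{D}(A^* )\subseteq\mathcal{D}(\bar A_0)$. If $$\sup_{n\in\mathbb{N}}\|\mathrm{ad}(T_n,\bar A)\|<+\infty,$$ then $\bar A_0=A^*$.
   Context: $\mathbf{B}(\mathcal{K})$ denotes the space of all bounded linear operators defined on all of $\mathcal{K}$. For operators $S,T$, $\mathrm{ad}(S,T):=ST-TS$, with sums and products of unbounded operators taken on their natural domains. $\bar S$ denotes the closure of a closable operator $S$; $\mathcal{D}(S)$ its domain. An operator $S$ is called bounded if $\|Sf\|\le c\|f\|$ for all $f\in\mathcal{D}(S)$ and some $c\ge0$, and $\|S\|$ is the supremum of $\|Sf\|$ over $f\in\mathcal{D}(S)$, $\|f\|\le1$. *)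

theory Defs
  imports "HOL-Analysis.Analysis"
begin

text \<open>Linear operators in a Hilbert space are represented by their graphs,
  i.e. subsets of 'a \<times> 'a.  Inclusion of operators is inclusion of graphs.\<close>

type_synonym 'a linop = "('a \<times> 'a) set"

definition op_dom :: "'a linop \<Rightarrow> 'a set" where
  "op_dom S = {x. \<exists>y. (x, y) \<in> S}"

definition is_op :: "('a::real_vector) linop \<Rightarrow> bool" where
  "is_op S \<longleftrightarrow> subspace S \<and> (\<forall>y. (0, y) \<in> S \<longrightarrow> y = 0)"

definition densely_defined :: "('a::real_normed_vector) linop \<Rightarrow> bool" where
  "densely_defined S \<longleftrightarrow> closure (op_dom S) = UNIV"

definition op_closure :: "('a::real_normed_vector) linop \<Rightarrow> 'a linop" where
  "op_closure S = closure S"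

definition closable :: "('a::real_normed_vector) linop \<Rightarrow> bool" where
  "closable S \<longleftrightarrow> is_op (closure S)"

definition op_adjoint :: "('a::real_inner) linop \<Rightarrow> 'a linop" where
  "op_adjoint S = {(y, z). \<forall>(x, w) \<in> S. inner w y = inner x z}"

definition graph_of :: "('a \<Rightarrow> 'a) \<Rightarrow> 'a linop" where
  "graph_of f = {(x, f x) | x. True}"

text \<open>op_comp S R = S R (first R, then S), on its natural domain.\<close>
definition op_comp :: "'a linop \<Rightarrow> 'a linop \<Rightarrow> 'a linop" where
  "op_comp S R = {(x, z). \<exists>y. (x, y) \<in> R \<and> (y, z) \<in> S}"

definition op_diff :: "('a::ab_group_add) linop \<Rightarrow> 'a linop \<Rightarrow> 'a linop" where
  "op_diff S R = {(x, u - v) | x u v. (x, u) \<in> S \<and> (x, v) \<in> R}"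

definition ad :: "('a::ab_group_add) linop \<Rightarrow> 'a linop \<Rightarrow> 'a linop" where
  "ad S T = op_diff (op_comp S T) (op_comp T S)"

definition op_bounded :: "('a::real_normed_vector) linop \<Rightarrow> bool" where
  "op_bounded S \<longleftrightarrow> (\<exists>c\<ge>0. \<forall>(x, y) \<in> S. norm y \<le> c * norm x)"

definition op_norm :: "('a::real_normed_vector) linop \<Rightarrow> real" where
  "op_norm S = Sup {norm y | x y. (x, y) \<in> S \<and> norm x \<le> 1}"

definition wot_tendsto_id :: "(nat \<Rightarrow> 'a \<Rightarrow> 'a::real_inner) \<Rightarrow> bool" where
  "wot_tendsto_id T \<longleftrightarrow> (\<forall>x y. (\<lambda>n. inner (T n x) y) \<longlonglongrightarrow> inner x y)"

end

theory Submission
  imports Defs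
begin

lemma subspace_closure_lemma:
  fixes S :: "'b::real_normed_vector set"
  assumes "subspace S" shows "subspace (closure S)"
  unfolding subspace_def
proof (intro conjI ballI allI)
  show "0 \<in> closure S" using assms closure_subset subspace_0 by blast
next
  fix x y assume "x \<in> closure S" "y \<in> closure S"
  then obtain f g where f: "\<forall>n. f n \<in> S" "f \<longlonglongrightarrow> x" and g: "\<forall>n. g n \<in> S" "g \<longlonglongrightarrow> y"
    by (meson closure_sequential)
  have "(\<lambda>n. f n + g n) \<longlonglongrightarrow> x + y" by (intro tendsto_intros f g)
  moreover have "\<forall>n. f n + g n \<in> S" using f g assms subspace_add by blast
  ultimately show "x + y \<in> closure S" by (meson closure_sequential)
next
  fix c :: real and x assume "x \<in> closure S"
  then obtain f where f: "\<forall>n. f n \<in> S" "f \<longlonglongrightarrow> x"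
    by (meson closure_sequential)
  have "(\<lambda>n. c *\<^sub>R f n) \<longlonglongrightarrow> c *\<^sub>R x" by (intro tendsto_intros f)
  moreover have "\<forall>n. c *\<^sub>R f n \<in> S" using f assms subspace_scale by blast
  ultimately show "c *\<^sub>R x \<in> closure S" by (meson closure_sequential)
qed

lemma proj_exists:
  fixes S :: "'b::{real_inner,complete_space} set"
  assumes S: "subspace S" "closed S"
  shows "\<exists>q\<in>S. \<forall>g\<in>S. inner (p - q) g = 0"
proof -
  define D where "D = {(norm (p - s))\<^sup>2 | s. s \<in> S}"
  define d where "d = Inf D"
  have ne: "D \<noteq> {}" using S subspace_0 D_def by blast
  have bdd: "bdd_below D" unfolding D_def by (rule bdd_belowI[of _ 0]) auto
  have dle: "d \<le> (norm (p - s))\<^sup>2" if "s \<in> S" for s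
    unfolding d_def by (rule cInf_lower[OF _ bdd]) (use that D_def in auto)
  have "\<exists>s\<in>S. (norm (p - s))\<^sup>2 < d + 1 / Suc n" for n
  proof -
    have "Inf D < d + 1 / Suc n" unfolding d_def by simp
    then obtain t where "t \<in> D" "t < d + 1 / Suc n" using cInf_lessD[OF ne] by blast
    then show ?thesis unfolding D_def by auto
  qed
  then obtain s where s: "\<And>n. s n \<in> S" "\<And>n. (norm (p - s n))\<^sup>2 < d + 1 / Suc n"
    by metis
  have par: "(norm (s m - s n))\<^sup>2 \<le> 2 / Suc m + 2 / Suc n" for m n
  proof -
    have mid: "(1/2) *\<^sub>R (s m + s n) \<in> S" using S s(1) subspace_add subspace_scale by blast
    have "d \<le> (norm (p - (1/2) *\<^sub>R (s m + s n)))\<^sup>2" by (rule dle[OF mid])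
    moreover have "(norm (s m - s n))\<^sup>2 = 2 * (norm (p - s m))\<^sup>2 + 2 * (norm (p - s n))\<^sup>2
        - 4 * (norm (p - (1/2) *\<^sub>R (s m + s n)))\<^sup>2"
      unfolding power2_norm_eq_inner
      by (simp add: inner_diff_left inner_diff_right inner_add_left inner_add_right inner_commute algebra_simps)
    ultimately show ?thesis using s(2)[of m] s(2)[of n] by linarith
  qed
  have "Cauchy s"
  proof (rule CauchyI)
    fix e :: real assume e: "0 < e"
    obtain N :: nat where N: "4 / e\<^sup>2 < N" using reals_Archimedean2 by blast
    have Npos: "0 < real N" using N e by (smt (verit) divide_pos_pos zero_less_power)
    show "\<exists>M. \<forall>m\<ge>M. \<forall>n\<ge>M. norm (s m - s n) < e"
    proof (intro exI allI impI)
      fix m n assume mn: "N \<le> m" "N \<le> n"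
      have "2 / real (Suc m) \<le> 2 / N" using mn Npos by (simp add: frac_le)
      moreover have "2 / real (Suc n) \<le> 2 / N" using mn Npos by (simp add: frac_le)
      moreover have "4 / N < e\<^sup>2" using N e Npos by (simp add: field_simps)
      ultimately have "(norm (s m - s n))\<^sup>2 < e\<^sup>2" using par[of m n] by linarith
      then show "norm (s m - s n) < e" using e by (simp add: power_less_imp_less_base)
    qed
  qed
  then obtain q where q: "s \<longlonglongrightarrow> q" using Cauchy_convergent_iff convergent_def by blast
  have qS: "q \<in> S" using closed_sequentially[OF S(2) s(1) q] .
  have lim1: "(\<lambda>n. (norm (p - s n))\<^sup>2) \<longlonglongrightarrow> (norm (p - q))\<^sup>2" by (intro tendsto_intros q)
  have lim2: "(\<lambda>n. d + 1 / Suc n) \<longlonglongrightarrow> d + 0"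
    by (intro tendsto_intros) (rule LIMSEQ_inverse_real_of_nat[unfolded inverse_eq_divide])
  have qd: "(norm (p - q))\<^sup>2 \<le> d"
    using LIMSEQ_le[OF lim1 lim2] s(2) less_imp_le by auto
  have min: "(norm (p - q))\<^sup>2 \<le> (norm (p - g))\<^sup>2" if "g \<in> S" for g
    using qd dle[OF that] by linarith
  show ?thesis
  proof (intro bexI[OF _ qS] ballI)
    fix g assume g: "g \<in> S"
    define c where "c = inner (p - q) g"
    show "inner (p - q) g = 0"
    proof (cases "g = 0")
      case True then show ?thesis by simp
    next
      case False
      define t where "t = c / inner g g"
      have gg: "inner g g > 0" using False by simp
      have "q + t *\<^sub>R g \<in> S" using S qS g subspace_add subspace_scale by blast
      from min[OF this] have "inner (p - q) (p - q) \<le> inner (p - q - t *\<^sub>R g) (p - q - t *\<^sub>R g)"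
        unfolding power2_norm_eq_inner by (simp add: algebra_simps)
      then have "0 \<le> - 2 * t * c + t * t * inner g g"
        unfolding c_def by (simp add: inner_diff_left inner_diff_right inner_commute algebra_simps)
      then have "0 \<le> - c * c / inner g g" unfolding t_def using gg by (simp add: field_simps power2_eq_square)
      then have "c * c \<le> 0" using gg by (simp add: divide_le_0_iff)
      then show ?thesis unfolding c_def[symmetric] by (auto simp add: mult_le_0_iff)
    qed
  qed
qed

lemma riesz:
  fixes f :: "'b::{real_inner,complete_space} \<Rightarrow> real"
  assumes f: "bounded_linear f" shows "\<exists>z. \<forall>x. f x = inner x z"
proof (cases "\<forall>x. f x = 0")
  case True then show ?thesis by (intro exI[of _ 0]) simp
next
  case False
  then obtain e where e: "f e \<noteq> 0" by blast
  interpret f: bounded_linear f by (rule f)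
  define K where "K = {x. f x = 0}"
  have "subspace K" unfolding K_def subspace_def by (auto simp: f.add f.scale)
  moreover have "closed K" unfolding K_def
    by (intro closed_Collect_eq continuous_intros f.continuous_on continuous_on_id)
  ultimately obtain q where q: "q \<in> K" "\<forall>g\<in>K. inner (e - q) g = 0" using proj_exists by blast
  define u where "u = e - q"
  have fu: "f u \<noteq> 0" using e q(1) unfolding u_def K_def by (simp add: f.diff)
  then have "u \<noteq> 0" by auto
  then have uu: "inner u u > 0" by simp
  show ?thesis
  proof (intro exI allI)
    fix x
    have "x - (f x / f u) *\<^sub>R u \<in> K" unfolding K_def using fu by (simp add: f.diff f.scale)
    then have "inner u (x - (f x / f u) *\<^sub>R u) = 0" using q(2) u_def by blast
    then have "inner u x = (f x / f u) * inner u u" by (simp add: inner_diff_right)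
    then show "f x = inner x ((f u / inner u u) *\<^sub>R u)"
      using fu uu by (simp add: inner_commute field_simps)
  qed
qed

lemma in_closed_subspace:
  fixes S :: "'b::{real_inner,complete_space} set"
  assumes "subspace S" "closed S" "\<And>w. (\<forall>g\<in>S. inner w g = 0) \<Longrightarrow> inner w p = 0"
  shows "p \<in> S"
proof -
  obtain q where q: "q \<in> S" "\<forall>g\<in>S. inner (p - q) g = 0" using proj_exists assms(1,2) by blast
  have "inner (p - q) p = 0" using assms(3) q(2) by blast
  moreover have "inner (p - q) q = 0" using q by blast
  ultimately have "inner (p - q) (p - q) = 0" by (simp add: inner_diff_right)
  then show ?thesis using q(1) by simp
qed

lemma adj_closure:
  fixes A :: "('a::real_inner) linop"
  assumes "(x, w) \<in> closure A" "(y, a) \<in> op_adjoint A"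
  shows "inner w y = inner x a"
proof -
  have "closed {p::'a\<times>'a. inner (snd p) y = inner (fst p) a}"
    by (intro closed_Collect_eq continuous_intros)
  moreover have "A \<subseteq> {p. inner (snd p) y = inner (fst p) a}"
    using assms(2) unfolding op_adjoint_def by auto
  ultimately have "closure A \<subseteq> {p. inner (snd p) y = inner (fst p) a}" by (rule closure_minimal[rotated])
  then show ?thesis using assms(1) by auto
qed

lemma adj_closed:
  fixes A :: "('a::real_inner) linop"
  shows "closed (op_adjoint A)"
proof -
  have "op_adjoint A = (\<Inter>p\<in>A. {q. inner (snd p) (fst q) = inner (fst p) (snd q)})"
    unfolding op_adjoint_def by fastforce
  moreover have "closed {q::'a\<times>'a. inner (snd p) (fst q) = inner (fst p) (snd q)}" for p :: "'a\<times>'a"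
    by (intro closed_Collect_eq continuous_intros)
  ultimately show ?thesis by auto
qed

lemma dense_zero:
  fixes D :: "'a::real_inner set"
  assumes "closure D = UNIV" "\<And>x. x \<in> D \<Longrightarrow> inner x z = 0"
  shows "z = 0"
proof -
  have "closed {x. inner x z = 0}" by (intro closed_Collect_eq continuous_intros)
  then have "closure D \<subseteq> {x. inner x z = 0}" using assms(2) by (intro closure_minimal) auto
  then have "inner z z = 0" using assms(1) by blast
  then show ?thesis by simp
qed

lemma dense_bound:
  fixes D :: "'a::real_inner set"
  assumes "closure D = UNIV" "\<And>x. x \<in> D \<Longrightarrow> \<bar>inner x z\<bar> \<le> M * norm x"
  shows "\<bar>inner v z\<bar> \<le> M * norm v"
proof -
  have "closed {x. \<bar>inner x z\<bar> \<le> M * norm x}" by (intro closed_Collect_le continuous_intros)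
  then have "closure D \<subseteq> {x. \<bar>inner x z\<bar> \<le> M * norm x}" using assms(2) by (intro closure_minimal) auto
  then show ?thesis using assms(1) by auto
qed

lemma ad_mem:
  "(x, b) \<in> ad (graph_of L) B \<longleftrightarrow> (\<exists>s v. (x, s) \<in> B \<and> (L x, v) \<in> B \<and> b = L s - v)"
  unfolding ad_def op_diff_def op_comp_def graph_of_def by auto

lemma ad_bound:
  fixes B :: "('a::real_normed_vector) linop"
  assumes B: "subspace B" and L: "linear L" and bd: "op_bounded (ad (graph_of L) B)"
    and nC: "op_norm (ad (graph_of L) B) \<le> C" and xb: "(x, b) \<in> ad (graph_of L) B"
  shows "norm b \<le> C * norm x"
proof -
  obtain c where c: "c \<ge> 0" "\<forall>(x, y) \<in> ad (graph_of L) B. norm y \<le> c * norm x"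
    using bd unfolding op_bounded_def by blast
  show ?thesis
  proof (cases "x = 0")
    case True
    then have "norm b \<le> 0" using c xb by fastforce
    then show ?thesis using True by simp
  next
    case False
    define r where "r = 1 / norm x"
    obtain s v where sv: "(x, s) \<in> B" "(L x, v) \<in> B" "b = L s - v" using xb ad_mem by blast
    have "r *\<^sub>R (x, s) \<in> B" "r *\<^sub>R (L x, v) \<in> B" using sv B subspace_scale by blast+
    then have "(r *\<^sub>R x, r *\<^sub>R s) \<in> B" "(L (r *\<^sub>R x), r *\<^sub>R v) \<in> B"
      using L by (auto simp: linear_scale)
    moreover have "r *\<^sub>R b = L (r *\<^sub>R s) - r *\<^sub>R v" using sv L by (simp add: linear_scale scaleR_diff_right)
    ultimately have mem: "(r *\<^sub>R x, r *\<^sub>R b) \<in> ad (graph_of L) B" using ad_mem by blast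
    have nx: "norm (r *\<^sub>R x) = 1" using False r_def by simp
    have "norm (r *\<^sub>R b) \<le> op_norm (ad (graph_of L) B)"
      unfolding op_norm_def
    proof (rule cSup_upper)
      show "norm (r *\<^sub>R b) \<in> {norm y |x y. (x, y) \<in> ad (graph_of L) B \<and> norm x \<le> 1}"
        using mem nx by fastforce
      show "bdd_above {norm y |x y. (x, y) \<in> ad (graph_of L) B \<and> norm x \<le> 1}"
      proof (rule bdd_aboveI[of _ c], clarify)
        fix x y assume "(x, y) \<in> ad (graph_of L) B" "norm x \<le> 1"
        then have "norm y \<le> c * norm x" using c by fastforce
        also have "\<dots> \<le> c" using c(1) \<open>norm x \<le> 1\<close> by (simp add: mult_left_le)
        finally show "norm y \<le> c" .
      qed
    qed
    then have "norm b / norm x \<le> C" using nC r_def by simp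
    then show ?thesis using False by (simp add: divide_le_eq mult.commute)
  qed
qed

theorem theorem3:
  fixes A A0 :: "('a::{real_inner, complete_space}) linop"
    and T :: "nat \<Rightarrow> 'a \<Rightarrow> 'a"
  assumes "is_op A" and "closable A" and "densely_defined A"
    and "is_op A0" and "A0 \<subseteq> op_adjoint A"
    and "\<And>n. bounded_linear (T n)"
    and "wot_tendsto_id T"
    and f1: "\<And>n. densely_defined (ad (graph_of (T n)) (op_closure A))
               \<and> op_bounded (ad (graph_of (T n)) (op_closure A))"
    and f2: "\<And>n y z. y \<in> op_dom (op_adjoint A) \<Longrightarrow> (y, z) \<in> op_adjoint (graph_of (T n))
               \<Longrightarrow> z \<in> op_dom (op_closure A0)"
    and "\<exists>C. \<forall>n. op_norm (ad (graph_of (T n)) (op_closure A)) \<le> C"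
  shows "op_closure A0 = op_adjoint A"
proof -
  note TL = assms(6)
  have wot: "\<And>x y. (\<lambda>n. inner (T n x) y) \<longlonglongrightarrow> inner x y" using assms(7) wot_tendsto_id_def by blast
  obtain C where C: "\<And>n. op_norm (ad (graph_of (T n)) (closure A)) \<le> C"
    using assms(10) unfolding op_closure_def by blast
  have subA: "subspace A" using assms(1) is_op_def by blast
  have subA0: "subspace A0" using assms(4) is_op_def by blast
  have subAb: "subspace (closure A)" by (rule subspace_closure_lemma[OF subA])
  have sub1: "closure A0 \<subseteq> op_adjoint A"
    by (rule closure_minimal[OF assms(5) adj_closed])
  have domdense: "closure (op_dom (closure A)) = UNIV"
  proof -
    have "op_dom A \<subseteq> op_dom (closure A)" unfolding op_dom_def using closure_subset by blast
    then have "closure (op_dom A) \<subseteq> closure (op_dom (closure A))" by (rule closure_mono)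
    then show ?thesis using assms(3) unfolding densely_defined_def by auto
  qed
  have sub2: "(y, a) \<in> closure A0" if ya: "(y, a) \<in> op_adjoint A" for y a
  proof -
    have "\<forall>n. \<exists>z. \<forall>x. inner (T n x) y = inner x z"
    proof
      fix n
      have "bounded_linear (\<lambda>x. inner (T n x) y)"
        by (rule bounded_linear_compose[OF bounded_linear_inner_left TL])
      then show "\<exists>z. \<forall>x. inner (T n x) y = inner x z" by (rule riesz)
    qed
    then have "\<exists>f. \<forall>n. \<forall>x. inner (T n x) y = inner x (f n)" by (rule choice)
    then obtain ys where ys0: "\<forall>n. \<forall>x. inner (T n x) y = inner x (ys n)" by blast
    have ys: "\<And>n x. inner (T n x) y = inner x (ys n)" using ys0 by blast
    have "\<forall>n. \<exists>z. \<forall>x. inner (T n x) a = inner x z"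
    proof
      fix n
      have "bounded_linear (\<lambda>x. inner (T n x) a)"
        by (rule bounded_linear_compose[OF bounded_linear_inner_left TL])
      then show "\<exists>z. \<forall>x. inner (T n x) a = inner x z" by (rule riesz)
    qed
    then have "\<exists>f. \<forall>n. \<forall>x. inner (T n x) a = inner x (f n)" by (rule choice)
    then obtain as where as0: "\<forall>n. \<forall>x. inner (T n x) a = inner x (as n)" by blast
    have as: "\<And>n x. inner (T n x) a = inner x (as n)" using as0 by blast
    have ydom: "y \<in> op_dom (op_adjoint A)" unfolding op_dom_def using ya by blast
    have yadj: "(y, ys n) \<in> op_adjoint (graph_of (T n))" for n
      unfolding op_adjoint_def graph_of_def by (auto simp: ys)
    have "ys n \<in> op_dom (op_closure A0)" for n by (rule f2[OF ydom yadj])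
    then have "\<forall>n. ys n \<in> op_dom (closure A0)" unfolding op_closure_def by blast
    then have "\<forall>n. \<exists>w. (ys n, w) \<in> closure A0" unfolding op_dom_def by blast
    then have "\<exists>f. \<forall>n. (ys n, f n) \<in> closure A0" by (rule choice)
    then obtain ws where ws0: "\<forall>n. (ys n, ws n) \<in> closure A0" by blast
    have ws: "\<And>n. (ys n, ws n) \<in> closure A0" using ws0 by blast
    have wsA: "(ys n, ws n) \<in> op_adjoint A" for n using ws sub1 by blast
    define z where "z n = ws n - as n" for n
    have Z1: "inner x (z n) = inner b y" if xb0: "(x, b) \<in> ad (graph_of (T n)) (closure A)" for x b n
    proof -
      obtain s v where sv: "(x, s) \<in> closure A" "(T n x, v) \<in> closure A" "b = T n s - v"
        using ad_mem[THEN iffD1, OF xb0] by blast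
      have "inner x (ws n) = inner (T n s) y" using adj_closure[OF sv(1) wsA] ys by simp
      moreover have "inner x (as n) = inner v y" using adj_closure[OF sv(2) ya] as by simp
      ultimately show ?thesis unfolding z_def sv(3) by (simp add: inner_diff_right inner_diff_left)
    qed
    have Z3: "\<bar>inner v (z n)\<bar> \<le> (C * norm y) * norm v" for v n
    proof (rule dense_bound[where D = "op_dom (ad (graph_of (T n)) (closure A))"])
      show "closure (op_dom (ad (graph_of (T n)) (closure A))) = UNIV"
        using f1 unfolding densely_defined_def op_closure_def by blast
    next
      fix x assume "x \<in> op_dom (ad (graph_of (T n)) (closure A))"
      then obtain b where xb: "(x, b) \<in> ad (graph_of (T n)) (closure A)" unfolding op_dom_def by blast
      have bdn: "op_bounded (ad (graph_of (T n)) (closure A))" using f1[of n] unfolding op_closure_def by blast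
      have nb: "norm b \<le> C * norm x" by (rule ad_bound[OF subAb bounded_linear.linear[OF TL] bdn C xb])
      have "\<bar>inner x (z n)\<bar> = \<bar>inner b y\<bar>" using Z1[OF xb] by simp
      also have "\<dots> \<le> norm b * norm y" by (rule Cauchy_Schwarz_ineq2)
      also have "\<dots> \<le> C * norm x * norm y" using nb by (simp add: mult_right_mono)
      finally show "\<bar>inner x (z n)\<bar> \<le> C * norm y * norm x" by (simp add: algebra_simps)
    qed
    have Z4: "(\<lambda>n. inner x (z n)) \<longlonglongrightarrow> 0" if xd: "x \<in> op_dom (closure A)" for x
    proof -
      obtain e where e: "(x, e) \<in> closure A" using xd unfolding op_dom_def by blast
      have "inner x (ws n) = inner (T n e) y" for n using adj_closure[OF e wsA] ys by simp
      then have l1: "(\<lambda>n. inner x (ws n)) \<longlonglongrightarrow> inner e y" using wot by simp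
      have "inner x (as n) = inner (T n x) a" for n using as by simp
      then have l2: "(\<lambda>n. inner x (as n)) \<longlonglongrightarrow> inner x a" using wot by simp
      have "inner e y = inner x a" using adj_closure[OF e ya] .
      then have "(\<lambda>n. inner x (ws n) - inner x (as n)) \<longlonglongrightarrow> inner x a - inner x a"
        using tendsto_diff[OF l1 l2] by simp
      then show ?thesis unfolding z_def by (simp add: inner_diff_right)
    qed
    define M where "M = \<bar>C * norm y\<bar> + 1"
    have M: "M > 0" unfolding M_def by simp
    have Z3': "\<bar>inner v (z n)\<bar> \<le> M * norm v" for v n
    proof -
      have "C * norm y * norm v \<le> M * norm v" unfolding M_def by (intro mult_right_mono) auto
      then show ?thesis using Z3[of v n] by linarith
    qed
    have Z5: "(\<lambda>n. inner v (z n)) \<longlonglongrightarrow> 0" for v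
    proof (rule LIMSEQ_I)
      fix r :: real assume r: "0 < r"
      have "v \<in> closure (op_dom (closure A))" using domdense by simp
      then obtain x where x: "x \<in> op_dom (closure A)" "dist x v < r / (2 * M)"
        using closure_approachable[of v "op_dom (closure A)"] r M
        by (metis (no_types, lifting) divide_pos_pos mult_pos_pos zero_less_numeral)
      obtain N where N: "\<And>n. n \<ge> N \<Longrightarrow> norm (inner x (z n) - 0) < r / 2"
        using LIMSEQ_D[OF Z4[OF x(1)], of "r/2"] r by auto
      show "\<exists>no. \<forall>n\<ge>no. norm (inner v (z n) - 0) < r"
      proof (intro exI allI impI)
        fix n assume n: "n \<ge> N"
        have nvx: "norm (v - x) < r / (2 * M)" using x(2) by (simp add: dist_norm norm_minus_commute)
        have "\<bar>inner (v - x) (z n)\<bar> \<le> M * norm (v - x)" by (rule Z3')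
        also have "\<dots> < M * (r / (2 * M))" by (rule mult_strict_left_mono[OF nvx M])
        also have "\<dots> = r / 2" using M by simp
        finally have a1: "\<bar>inner (v - x) (z n)\<bar> < r / 2" .
        have a2: "\<bar>inner x (z n)\<bar> < r / 2" using N[OF n] by simp
        have "inner v (z n) = inner (v - x) (z n) + inner x (z n)" by (simp add: inner_diff_left)
        then show "norm (inner v (z n) - 0) < r" using a1 a2 by simp
      qed
    qed
    show ?thesis
    proof (rule in_closed_subspace[OF subspace_closure_lemma[OF subA0] closed_closure])
      fix w :: "'a \<times> 'a" assume w: "\<forall>g\<in>closure A0. inner w g = 0"
      obtain u v where uv: "w = (u, v)" by (cases w)
      have "inner w (ys n, ws n) = 0" for n using w ws by blast
      then have zero: "inner u (ys n) + inner v (ws n) = 0" for n using uv by simp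
      have e1: "inner u (ys n) = inner (T n u) y" for n by (rule ys[symmetric])
      have e2: "inner v (ws n) = inner (T n v) a + inner v (z n)" for n
        using as[of n v] unfolding z_def by (simp add: inner_diff_right)
      have lim: "(\<lambda>n. inner (T n u) y + (inner (T n v) a + inner v (z n))) \<longlonglongrightarrow> inner u y + (inner v a + 0)"
        by (intro tendsto_add wot Z5)
      have "(\<lambda>n. inner (T n u) y + (inner (T n v) a + inner v (z n))) = (\<lambda>n. 0)"
        using zero e1 e2 by (simp only:)
      then have "(\<lambda>n. 0::real) \<longlonglongrightarrow> inner u y + (inner v a + 0)" using lim by simp
      then have "inner u y + inner v a = 0" using LIMSEQ_unique[OF tendsto_const] by fastforce
      then show "inner w (y, a) = 0" using uv by simp
    qed
  qed
  show ?thesis unfolding op_closure_def using sub1 sub2 by auto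
qed

end
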